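(* The size $z_{End}$ of the LZ-End factorization satisfies, for each edit type $\ast\in\{\mathrm{sub},\mathrm{ins},\mathrm{del}\}$ (the alphabet being allowed to contain as many distinct characters as needed): $\liminf_{n\to\infty}\mathsf{MS}_{\ast}(z_{End},n)\ge 2$, $\mathsf{AS}_{\ast}(z_{End},n)\ge z_{End}-\Theta(\sqrt{z_{End}})$, and $\mathsf{AS}_{\ast}(z_{End},n)=\Omega(\sqrt n)$.
   Context: $\mathsf{ed}$ is the edit distance. $\mathsf{MS}_{\mathrm{sub}}(C,n)=\max_{T\in\Sigma^n}\{C(T')/C(T): T'\in\Sigma^n,\ \mathsf{ed}(T,T')=1\}$, with $\mathsf{MS}_{\mathrm{ins}},\mathsf{MS}_{\mathrm{del}}$ analogous for $T'$ of length $n+1$, resp. $n-1$, and $\mathsf{AS}_\ast$ analogous with $C(T')-C(T)$. Bounds in terms of $z_{End}$ refer to $z_{End}(T)$ of the original string and assert existence of strings $T$ (with $z_{End}(T)$ arbitrarily large) and edited $T'$ achieving them. The LZ-End factorization of $T$ (length $n$) is $T=f_1\cdots f_z$ where for each $1\le i<z$, $f_i[1..|f_i|-1]$ is the longest prefix of $f_i\cdots f_z$ that occurs as a suffix of some string in $\{\varepsilon, f_1, f_1f_2,\ldots,f_1\cdots f_{i-1}\}$ (so $f_i$ is one character longer), and $f_z$ is the remaining suffix; $z_{End}(T)=z$. *)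

theory Defs
  imports Complex_Main "HOL-Library.Landau_Symbols" "HOL-Library.Extended_Real"
begin

fun ed :: "'a list \<Rightarrow> 'a list \<Rightarrow> nat" where
  "ed [] ys = length ys"
| "ed xs [] = length xs"
| "ed (x # xs) (y # ys) =
     min (min (Suc (ed xs (y # ys))) (Suc (ed (x # xs) ys)))
         (ed xs ys + (if x = y then 0 else 1))"

text \<open>Given the string T, the list E of phrase end positions so far (including 0, i.e. the
empty prefix) and the current position pos, the next phrase is f = p c where p is the longest
prefix of drop pos T that occurs as a suffix of take e T for some e in E; the last phrase is
the remaining suffix (so the phrase length is min (|p|+1) (|T|-pos)).\<close>

definition lze_longest :: "'a list \<Rightarrow> nat list \<Rightarrow> nat \<Rightarrow> nat" where
  "lze_longest T E pos = (GREATEST l. l \<le> length T - pos \<and>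
      (\<exists>e\<in>set E. l \<le> e \<and> take l (drop pos T) = drop (e - l) (take e T)))"

function lzend_phrases :: "'a list \<Rightarrow> nat list \<Rightarrow> nat \<Rightarrow> 'a list list" where
  "lzend_phrases T E pos =
     (if length T \<le> pos then []
      else (let len = min (Suc (lze_longest T E pos)) (length T - pos)
            in take len (drop pos T) # lzend_phrases T (E @ [pos + len]) (pos + len)))"
  by pat_completeness auto
termination
  by (relation "measure (\<lambda>(T, E, pos). length T - pos)") auto

definition lzend_factorization :: "'a list \<Rightarrow> 'a list list" where
  "lzend_factorization T = lzend_phrases T [0] 0"

definition z_End :: "'a list \<Rightarrow> nat" where
  "z_End T = length (lzend_factorization T)"

datatype edit_type = Sub | Ins | Del

definition edit_ok :: "edit_type \<Rightarrow> 'a list \<Rightarrow> 'a list \<Rightarrow> bool" where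
  "edit_ok k T T' \<longleftrightarrow>
     length T' = (case k of Sub \<Rightarrow> length T | Ins \<Rightarrow> Suc (length T) | Del \<Rightarrow> length T - 1)
     \<and> ed T T' = 1"

text \<open>Alphabet: nat (as many distinct characters as needed).\<close>

definition MS :: "(nat list \<Rightarrow> nat) \<Rightarrow> edit_type \<Rightarrow> nat \<Rightarrow> real" where
  "MS C k n = Sup {real (C T') / real (C T) | T T'. length T = n \<and> edit_ok k T T'}"

definition AS :: "(nat list \<Rightarrow> nat) \<Rightarrow> edit_type \<Rightarrow> nat \<Rightarrow> real" where
  "AS C k n = Sup {real (C T') - real (C T) | T T'. length T = n \<and> edit_ok k T T'}"

end

theory Submission
  imports Defs
begin


declare lzend_phrases.simps[simp del]

lemma lzp_end: "length T \<le> pos \<Longrightarrow> lzend_phrases T E pos = []"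
  by (subst lzend_phrases.simps) simp

lemma lzp_len_le: "length (lzend_phrases T E pos) \<le> length T - pos"
proof (induction T E pos rule: lzend_phrases.induct)
  case (1 T E pos)
  show ?case
  proof (cases "length T \<le> pos")
    case True then show ?thesis by (simp add: lzp_end)
  next
    case False
    define len where "len = min (Suc (lze_longest T E pos)) (length T - pos)"
    have "lzend_phrases T E pos = take len (drop pos T) # lzend_phrases T (E @ [pos + len]) (pos + len)"
      using False by (subst lzend_phrases.simps) (simp add: len_def Let_def)
    moreover have "length (lzend_phrases T (E @ [pos + len]) (pos + len)) \<le> length T - (pos + len)"
      using 1 False len_def by simp
    moreover have "len \<ge> 1" "len \<le> length T - pos" using False len_def by auto
    ultimately show ?thesis by simp
  qed
qed

lemma z_End_le: "z_End T \<le> length T"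
  using lzp_len_le[of T "[0]" 0] by (simp add: z_End_def lzend_factorization_def)

lemma lzp_step:
  assumes "pos < length T" "lze_longest T E pos = L" "Suc L \<le> length T - pos"
  shows "length (lzend_phrases T E pos) = Suc (length (lzend_phrases T (E @ [pos + Suc L]) (pos + Suc L)))"
  using assms by (subst lzend_phrases.simps) (simp add: Let_def min_def)

lemma longest_eq:
  assumes "L \<le> length T - pos" "e \<in> set E" "L \<le> e" "take L (drop pos T) = drop (e - L) (take e T)"
    and "\<And>l e. l \<le> length T - pos \<Longrightarrow> e \<in> set E \<Longrightarrow> l \<le> e \<Longrightarrow> take l (drop pos T) = drop (e - l) (take e T) \<Longrightarrow> l \<le> L"
  shows "lze_longest T E pos = L"
  unfolding lze_longest_def
  by (rule Greatest_equality) (use assms in blast)+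

lemma copy_nth:
  assumes "take l (drop pos T) = drop (e - l) (take e T)" "i < l" "l \<le> length T - pos" "l \<le> e" "e \<le> length T"
  shows "T ! (pos + i) = T ! (e - l + i)"
proof -
  have "take l (drop pos T) ! i = drop (e - l) (take e T) ! i" using assms(1) by (simp only:)
  moreover have "take l (drop pos T) ! i = T ! (pos + i)" using assms(2,3) by simp
  moreover have "drop (e - l) (take e T) ! i = take e T ! (e - l + i)"
    using assms by (subst nth_drop) auto
  moreover have "take e T ! (e - l + i) = T ! (e - l + i)" using assms by (subst nth_take) auto
  ultimately show ?thesis by simp
qed

lemma step_pattern:
  assumes "pos + L < length T" "e \<in> set E" "L \<le> e" "take L (drop pos T) = drop (e - L) (take e T)"
    and "\<forall>e\<in>set E. e \<le> pos"
    and "\<And>q. q < pos \<Longrightarrow> T ! q = T ! (pos + L) \<Longrightarrow> L \<le> q \<Longrightarrow> (\<forall>i<L. T ! (q - L + i) = T ! (pos + i)) \<Longrightarrow> False"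
  shows "length (lzend_phrases T E pos) = Suc (length (lzend_phrases T (E @ [pos + Suc L]) (pos + Suc L)))"
proof -
  have "lze_longest T E pos = L"
  proof (rule longest_eq[OF _ assms(2,3,4)])
    show "L \<le> length T - pos" using assms(1) by simp
    fix l e' assume l: "l \<le> length T - pos" "e' \<in> set E" "l \<le> e'" "take l (drop pos T) = drop (e' - l) (take e' T)"
    show "l \<le> L"
    proof (rule ccontr)
      assume "\<not> l \<le> L"
      hence lL: "L < l" by simp
      have e'p: "e' \<le> pos" using assms(5) l(2) by blast
      have eT: "e' \<le> length T" using e'p assms(1) by simp
      have "\<forall>i\<le>L. T ! (pos + i) = T ! (e' - l + i)"
        using copy_nth[OF l(4) _ l(1) l(3) eT] lL by auto
      moreover have "e' - l + L < pos" using lL e'p l(3) by simp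
      moreover have "\<forall>i<L. T ! (e' - l + L - L + i) = T ! (pos + i)"
        using calculation(1) by auto
      ultimately show False
        using assms(6)[of "e' - l + L"] by auto
    qed
  qed
  then show ?thesis using assms(1) by (intro lzp_step) auto
qed

lemma step_fresh:
  assumes "pos + L < length T" "e \<in> set E" "L \<le> e" "take L (drop pos T) = drop (e - L) (take e T)"
    and "\<forall>e\<in>set E. e \<le> pos" "T ! (pos + L) \<notin> set (take pos T)"
  shows "length (lzend_phrases T E pos) = Suc (length (lzend_phrases T (E @ [pos + Suc L]) (pos + Suc L)))"
proof (rule step_pattern[OF assms(1-5)])
  fix q assume "q < pos" "T ! q = T ! (pos + L)"
  hence "T ! (pos + L) \<in> set (take pos T)" using assms(1)
    by (metis in_set_conv_nth length_take min.absorb4 nth_take order.strict_trans add_lessD1)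
  with assms(6) show False by simp
qed

lemma step_double:
  assumes "pos + pos < length T" "pos \<in> set E" "\<forall>e\<in>set E. e \<le> pos" "take pos (drop pos T) = take pos T"
  shows "length (lzend_phrases T E pos) = Suc (length (lzend_phrases T (E @ [pos + Suc pos]) (pos + Suc pos)))"
proof -
  have "lze_longest T E pos = pos"
    by (rule longest_eq[OF _ assms(2)]) (use assms in auto)
  then show ?thesis using assms(1) by (intro lzp_step) auto
qed

lemma prefix_parse:
  fixes c :: nat
  assumes T: "T = replicate m 0 @ c # R" and c: "c \<noteq> 0"
  shows "pos \<le> m \<Longrightarrow> pos \<in> set E \<Longrightarrow> \<forall>e\<in>set E. e \<le> pos \<Longrightarrow>
    \<exists>E' cnt. length (lzend_phrases T E pos) = cnt + length (lzend_phrases T E' (Suc m))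
      \<and> 1 \<le> cnt \<and> (pos + 1) * 2 ^ (cnt - 1) \<le> m + 1
      \<and> (\<forall>e\<in>set E'. e \<le> Suc m) \<and> Suc m \<in> set E'
      \<and> (\<exists>e0\<in>set E'. m \<le> 2 * e0 \<and> e0 \<le> m)"
proof (induction "m - pos" arbitrary: pos E rule: less_induct)
  case less
  have lenT: "length T = m + 1 + length R" using T by simp
  have Tlow: "T ! i = 0" if "i < m" for i using that T by (simp add: nth_append)
  have Tm: "T ! m = c" using T by (simp add: nth_append)
  show ?case
  proof (cases "2 * pos + 1 \<le> m")
    case True
    have tk: "take pos (drop pos T) = take pos T"
      using True T by (simp add: take_drop min_def)
    have st: "length (lzend_phrases T E pos) = Suc (length (lzend_phrases T (E @ [pos + Suc pos]) (pos + Suc pos)))"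
      by (rule step_double) (use less.prems True lenT tk in auto)
    have lt: "m - (pos + Suc pos) < m - pos" using True by simp
    have IH: "\<exists>E' cnt. length (lzend_phrases T (E @ [pos + Suc pos]) (pos + Suc pos)) = cnt + length (lzend_phrases T E' (Suc m))
      \<and> 1 \<le> cnt \<and> (pos + Suc pos + 1) * 2 ^ (cnt - 1) \<le> m + 1
      \<and> (\<forall>e\<in>set E'. e \<le> Suc m) \<and> Suc m \<in> set E'
      \<and> (\<exists>e0\<in>set E'. m \<le> 2 * e0 \<and> e0 \<le> m)"
    proof (rule less.hyps[OF lt])
      show "pos + Suc pos \<le> m" using True by simp
      show "pos + Suc pos \<in> set (E @ [pos + Suc pos])" by simp
      show "\<forall>e\<in>set (E @ [pos + Suc pos]). e \<le> pos + Suc pos" using less.prems(3) by auto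
    qed
    then obtain E' cnt where h: "length (lzend_phrases T (E @ [pos + Suc pos]) (pos + Suc pos)) = cnt + length (lzend_phrases T E' (Suc m))"
      "1 \<le> cnt" "(pos + Suc pos + 1) * 2 ^ (cnt - 1) \<le> m + 1"
      "(\<forall>e\<in>set E'. e \<le> Suc m)" "Suc m \<in> set E'" "(\<exists>e0\<in>set E'. m \<le> 2 * e0 \<and> e0 \<le> m)"
      by blast
    have "(pos + 1) * 2 ^ (Suc cnt - 1) = (pos + Suc pos + 1) * 2 ^ (cnt - 1)"
      using h(2) by (cases cnt) auto
    then show ?thesis using h st
      by (intro exI[of _ E'] exI[of _ "Suc cnt"]) simp
  next
    case False
    define L where "L = m - pos"
    have Lp: "L \<le> pos" using False L_def by simp
    have tk1: "take L (drop pos T) = replicate L 0"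
      using less.prems T L_def by (simp add: take_drop min_def)
    have tk2: "drop (pos - L) (take pos T) = replicate L 0"
      using less.prems T L_def Lp by (simp add: min_def)
    have notin: "T ! (pos + L) \<notin> set (take pos T)"
      using less.prems T L_def c by (auto simp: nth_append min_def)
    have st: "length (lzend_phrases T E pos) = Suc (length (lzend_phrases T (E @ [pos + Suc L]) (pos + Suc L)))"
    proof (rule step_fresh[of pos L T pos])
      show "pos + L < length T" using lenT L_def less.prems(1) by simp
      show "pos \<in> set E" by (rule less.prems(2))
      show "L \<le> pos" by (rule Lp)
      show "take L (drop pos T) = drop (pos - L) (take pos T)" using tk1 tk2 by simp
      show "\<forall>e\<in>set E. e \<le> pos" by (rule less.prems(3))
      show "T ! (pos + L) \<notin> set (take pos T)" by (rule notin)
    qed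
    have eq: "pos + Suc L = Suc m" using L_def less.prems by simp
    have "(pos + 1) * 2 ^ (1 - 1) \<le> m + 1" using less.prems(1) by simp
    moreover have "\<forall>e\<in>set (E @ [Suc m]). e \<le> Suc m" using less.prems(1,3) by auto
    moreover have "\<exists>e0\<in>set (E @ [Suc m]). m \<le> 2 * e0 \<and> e0 \<le> m"
      using less.prems(1,2) False by (intro bexI[of _ pos]) auto
    ultimately show ?thesis
      using st unfolding eq
      by (intro exI[of _ "E @ [Suc m]"] exI[of _ 1]) simp
  qed
qed

definition blk :: "nat \<Rightarrow> nat list" where
  "blk j = replicate (j - 1) 0 @ [1, j + 3]"

definition blks :: "nat \<Rightarrow> nat \<Rightarrow> nat list" where
  "blks j k = concat (map blk [j..<Suc k])"

lemma blks_Cons: "j \<le> k \<Longrightarrow> blks j k = blk j @ blks (Suc j) k"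
  unfolding blks_def by (subst upt_conv_Cons) auto

lemma blks_Nil: "k < j \<Longrightarrow> blks j k = []"
  unfolding blks_def by simp

lemma length_blk: "1 \<le> j \<Longrightarrow> length (blk j) = Suc j"
  unfolding blk_def by simp

lemma blk_nth_last: "1 \<le> j \<Longrightarrow> blk j ! j = j + 3"
proof -
  assume j: "1 \<le> j"
  then obtain i where i: "j = Suc i" by (cases j) auto
  have "blk j ! j = (replicate i 0 @ [1, j + 3]) ! (length (replicate i (0::nat)) + 1)"
    unfolding blk_def i by simp
  also have "\<dots> = j + 3" by (subst nth_append_length_plus) simp
  finally show ?thesis .
qed

lemma blk_nth_x: "1 \<le> j \<Longrightarrow> blk j ! (j - 1) = 1"
  unfolding blk_def by (simp add: nth_append)

lemma T_blocks:
  "Suc k - j = d \<Longrightarrow> 1 \<le> j \<Longrightarrow> e1 \<in> set E \<Longrightarrow> e1 \<le> length U \<Longrightarrow> k \<le> e1 \<Longrightarrow> U ! (e1 - 1) = 1 \<Longrightarrow>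
   (\<forall>i. e1 - k \<le> i \<longrightarrow> i < e1 - 1 \<longrightarrow> U ! i = 0) \<Longrightarrow> (\<forall>e\<in>set E. e \<le> length U) \<Longrightarrow>
   (\<forall>i\<ge>j. i + 3 \<notin> set U) \<Longrightarrow>
   length (lzend_phrases (U @ blks j k) E (length U)) = d"
proof (induction d arbitrary: U E j)
  case 0
  then show ?case by (simp add: blks_Nil lzp_end)
next
  case (Suc d)
  have jk: "j \<le> k" using Suc.prems(1) by simp
  define T where "T = U @ blks j k"
  have T2: "T = U @ blk j @ blks (Suc j) k" using jk T_def blks_Cons by simp
  define U' where "U' = U @ blk j"
  have lU': "length U' = length U + Suc j" using U'_def length_blk Suc.prems(2) by simp
  have e1pos: "1 \<le> e1" using Suc.prems(2,5) jk by simp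
  have tk1: "take j (drop (length U) T) = replicate (j - 1) 0 @ [1]"
    using Suc.prems(2) by (simp add: T2 blk_def)
  have tk2: "drop (e1 - j) (take e1 T) = replicate (j - 1) 0 @ [1]"
  proof (rule nth_equalityI)
    show "length (drop (e1 - j) (take e1 T)) = length (replicate (j - 1) 0 @ [1::nat])"
      using Suc.prems(2,4,5) jk T2 by simp
    fix i assume "i < length (drop (e1 - j) (take e1 T))"
    hence i: "i < j" using Suc.prems(2,4,5) jk T2 by simp
    have "drop (e1 - j) (take e1 T) ! i = U ! (e1 - j + i)"
      using i Suc.prems(2,4,5) jk T2 by (simp add: nth_append)
    moreover have "U ! (e1 - j + i) = (replicate (j - 1) 0 @ [1::nat]) ! i"
    proof (cases "i = j - 1")
      case True then show ?thesis using Suc.prems(2,5,6) jk by (simp add: nth_append)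
    next
      case False
      hence i1: "i < j - 1" using i by simp
      have "U ! (e1 - j + i) = 0" using Suc.prems(7) Suc.prems(5) jk i1 by auto
      then show ?thesis using i1 by (simp add: nth_append)
    qed
    ultimately show "drop (e1 - j) (take e1 T) ! i = (replicate (j - 1) 0 @ [1]) ! i" by simp
  qed
  have st: "length (lzend_phrases T E (length U)) = Suc (length (lzend_phrases T (E @ [length U + Suc j]) (length U + Suc j)))"
  proof (rule step_fresh[of "length U" j T e1 E])
    show "length U + j < length T" using T2 length_blk Suc.prems(2) by simp
    show "e1 \<in> set E" by (rule Suc.prems(3))
    show "j \<le> e1" using jk Suc.prems(5) by simp
    show "take j (drop (length U) T) = drop (e1 - j) (take e1 T)" using tk1 tk2 by simp
    show "\<forall>e\<in>set E. e \<le> length U" by (rule Suc.prems(8))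
    have "T ! (length U + j) = j + 3" using T2 Suc.prems(2) length_blk[of j] blk_nth_last[of j]
      by (simp add: nth_append)
    then show "T ! (length U + j) \<notin> set (take (length U) T)" using T2 Suc.prems(9) by simp
  qed
  have IH: "length (lzend_phrases (U' @ blks (Suc j) k) (E @ [length U']) (length U')) = d"
  proof (rule Suc.IH)
    show "Suc k - Suc j = d" using Suc.prems(1) by simp
    show "1 \<le> Suc j" by simp
    show "e1 \<in> set (E @ [length U'])" using Suc.prems(3) by simp
    show "e1 \<le> length U'" using Suc.prems(4) lU' by simp
    show "k \<le> e1" by (rule Suc.prems(5))
    have "e1 - 1 < length U" using Suc.prems(4) e1pos by simp
    then show "U' ! (e1 - 1) = 1" using Suc.prems(6) U'_def by (simp add: nth_append)
    show "\<forall>i. e1 - k \<le> i \<longrightarrow> i < e1 - 1 \<longrightarrow> U' ! i = 0"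
      using Suc.prems(4,7) U'_def by (auto simp: nth_append)
    show "\<forall>e\<in>set (E @ [length U']). e \<le> length U'" using Suc.prems(8) lU' by auto
    show "\<forall>i\<ge>Suc j. i + 3 \<notin> set U'" using Suc.prems(9) U'_def by (auto simp: blk_def)
  qed
  have "T = U' @ blks (Suc j) k" using T2 U'_def by simp
  then show ?case using st IH T_def lU' by simp
qed


definition nox :: "nat list \<Rightarrow> nat \<Rightarrow> bool" where
  "nox U r \<longleftrightarrow> (\<forall>q<length U. U ! q = 1 \<longrightarrow> r \<le> q \<longrightarrow> (\<exists>i<r. U ! (q - r + i) \<noteq> 0))"

lemma nox_step:
  assumes nx: "nox U (j - 1)" and j: "1 \<le> j" and lst: "\<forall>q. Suc q = length U \<longrightarrow> U ! q \<noteq> 0"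
  shows "nox (U @ blk j) j"
  unfolding nox_def
proof (intro allI impI)
  fix q assume q: "q < length (U @ blk j)" "(U @ blk j) ! q = 1" "j \<le> q"
  show "\<exists>i<j. (U @ blk j) ! (q - j + i) \<noteq> 0"
  proof (cases "q < length U")
    case True
    with q nx have "U ! q = 1" "j - 1 \<le> q" by (auto simp: nth_append)
    with nx True obtain i where i: "i < j - 1" "U ! (q - (j - 1) + i) \<noteq> 0"
      unfolding nox_def by blast
    have eq: "q - (j - 1) + i = q - j + Suc i" using i q(3) j by simp
    show ?thesis using i True eq q(3) j
      by (intro exI[of _ "Suc i"]) (auto simp: nth_append)
  next
    case False
    define r where "r = q - length U"
    have r: "r < Suc j" using q(1) False length_blk[OF j] r_def by simp
    have br: "blk j ! r = 1" using q(2) False r_def by (simp add: nth_append)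
    have rj: "r = j - 1"
    proof (rule ccontr)
      assume "r \<noteq> j - 1"
      then consider "r < j - 1" | "r = j" using r by linarith
      then show False
      proof cases
        case 1 then show False using br by (simp add: blk_def nth_append)
      next
        case 2 then show False using br blk_nth_last[OF j] by simp
      qed
    qed
    have Upos: "length U \<ge> 1" using q(3) rj r_def False j by simp
    then obtain p where p: "Suc p = length U" by (cases "length U") auto
    have "q - j = p" using rj r_def False p j by simp
    then show ?thesis using lst p j by (intro exI[of _ 0]) (auto simp: nth_append)
  qed
qed

lemma take_zeros: "e \<le> length U \<Longrightarrow> \<forall>i<e. U ! i = (0::nat) \<Longrightarrow> take e U = replicate e 0"
  by (rule nth_equalityI) auto

lemma T'_blocks:
  "Suc k - j = d \<Longrightarrow> 1 \<le> j \<Longrightarrow> e0 \<in> set E \<Longrightarrow> e0 \<le> length U \<Longrightarrow> k \<le> Suc e0 \<Longrightarrow>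
   (\<forall>i<e0. U ! i = 0) \<Longrightarrow> (\<forall>e\<in>set E. e \<le> length U) \<Longrightarrow>
   nox U (j - 1) \<Longrightarrow> (\<forall>q. Suc q = length U \<longrightarrow> U ! q \<noteq> 0) \<Longrightarrow>
   (\<forall>i\<ge>j. i + 3 \<notin> set U) \<Longrightarrow>
   length (lzend_phrases (U @ blks j k) E (length U)) = 2 * d"
proof (induction d arbitrary: U E j)
  case 0
  then show ?case by (simp add: blks_Nil lzp_end)
next
  case (Suc d)
  have jk: "j \<le> k" using Suc.prems(1) by simp
  define T where "T = U @ blks j k"
  have T2: "T = U @ blk j @ blks (Suc j) k" using jk T_def blks_Cons by simp
  define U' where "U' = U @ blk j"
  have lU': "length U' = length U + Suc j" using U'_def length_blk Suc.prems(2) by simp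
  have tkU: "take e0 U = replicate e0 0" using take_zeros Suc.prems(4,6) by blast
  have tk1: "take (j - 1) (drop (length U) T) = replicate (j - 1) 0"
    using Suc.prems(2) by (simp add: T2 blk_def)
  have tk2: "drop (e0 - (j - 1)) (take e0 T) = replicate (j - 1) 0"
    using Suc.prems(4,5) jk tkU by (simp add: T2)
  have Tx: "T ! (length U + (j - 1)) = 1"
    unfolding T2 nth_append_length_plus
    using Suc.prems(2) length_blk[of j] blk_nth_x[of j] by (auto simp: nth_append)
  have st1: "length (lzend_phrases T E (length U)) = Suc (length (lzend_phrases T (E @ [length U + Suc (j - 1)]) (length U + Suc (j - 1))))"
  proof (rule step_pattern[of "length U" "j - 1" T e0 E])
    show "length U + (j - 1) < length T" using T2 length_blk Suc.prems(2) by simp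
    show "e0 \<in> set E" by (rule Suc.prems(3))
    show "j - 1 \<le> e0" using jk Suc.prems(5) by simp
    show "take (j - 1) (drop (length U) T) = drop (e0 - (j - 1)) (take e0 T)" using tk1 tk2 by simp
    show "\<forall>e\<in>set E. e \<le> length U" by (rule Suc.prems(7))
    fix q assume q: "q < length U" "T ! q = T ! (length U + (j - 1))" "j - 1 \<le> q"
      "\<forall>i<j - 1. T ! (q - (j - 1) + i) = T ! (length U + i)"
    have "U ! q = 1" using q(1,2) Tx T2 by (simp add: nth_append)
    moreover have "\<forall>i<j - 1. U ! (q - (j - 1) + i) = 0"
    proof (intro allI impI)
      fix i assume i: "i < j - 1"
      have "T ! (length U + i) = 0" unfolding T2 nth_append_length_plus using i by (simp add: nth_append blk_def)
      moreover have "q - (j - 1) + i < length U" using i q(1,3) by simp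
      moreover have "T ! (q - (j - 1) + i) = T ! (length U + i)" using q(4) i by blast
      moreover have "T ! (q - (j - 1) + i) = U ! (q - (j - 1) + i)"
        using calculation(2) T2 by (simp add: nth_append)
      ultimately show "U ! (q - (j - 1) + i) = 0" by simp
    qed
    ultimately show False using Suc.prems(8) q(1,3) unfolding nox_def by fastforce
  qed
  have pj: "length U + Suc (j - 1) = length U + j" using Suc.prems(2) by simp
  have st2: "length (lzend_phrases T (E @ [length U + j]) (length U + j)) = Suc (length (lzend_phrases T (E @ [length U + j] @ [length U + j + Suc 0]) (length U + j + Suc 0)))"
  proof -
    have "length (lzend_phrases T (E @ [length U + j]) (length U + j)) = Suc (length (lzend_phrases T ((E @ [length U + j]) @ [length U + j + Suc 0]) (length U + j + Suc 0)))"
    proof (rule step_fresh[of "length U + j" 0 T e0])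
      show "length U + j + 0 < length T" using T2 length_blk Suc.prems(2) by simp
      show "e0 \<in> set (E @ [length U + j])" using Suc.prems(3) by simp
      show "0 \<le> e0" by simp
      show "take 0 (drop (length U + j) T) = drop (e0 - 0) (take e0 T)" using Suc.prems(4) T2 by simp
      show "\<forall>e\<in>set (E @ [length U + j]). e \<le> length U + j" using Suc.prems(7) by auto
      have "T ! (length U + j) = j + 3" using T2 Suc.prems(2) length_blk[of j] blk_nth_last[of j]
        by (simp add: nth_append)
      moreover have "take (length U + j) T = U @ replicate (j - 1) 0 @ [1]"
        using T2 Suc.prems(2) by (simp add: blk_def)
      ultimately show "T ! (length U + j + 0) \<notin> set (take (length U + j) T)"
        using Suc.prems(10) by simp
    qed
    then show ?thesis by simp
  qed
  have IH: "length (lzend_phrases (U' @ blks (Suc j) k) (E @ [length U + j] @ [length U']) (length U')) = 2 * d"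
  proof (rule Suc.IH)
    show "Suc k - Suc j = d" using Suc.prems(1) by simp
    show "1 \<le> Suc j" by simp
    show "e0 \<in> set (E @ [length U + j] @ [length U'])" using Suc.prems(3) by simp
    show "e0 \<le> length U'" using Suc.prems(4) lU' by simp
    show "k \<le> Suc e0" by (rule Suc.prems(5))
    show "\<forall>i<e0. U' ! i = 0" using Suc.prems(4,6) U'_def by (auto simp: nth_append)
    show "\<forall>e\<in>set (E @ [length U + j] @ [length U']). e \<le> length U'" using Suc.prems(7) lU' by auto
    show "nox U' (Suc j - 1)" using nox_step[OF Suc.prems(8) Suc.prems(2) Suc.prems(9)] U'_def by simp
    show "\<forall>q. Suc q = length U' \<longrightarrow> U' ! q \<noteq> 0"
    proof (intro allI impI)
      fix q assume "Suc q = length U'"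
      hence "q = length U + j" using lU' by simp
      thus "U' ! q \<noteq> 0" using U'_def Suc.prems(2) length_blk[of j] blk_nth_last[of j] by (simp add: nth_append)
    qed
    show "\<forall>i\<ge>Suc j. i + 3 \<notin> set U'" using Suc.prems(10) U'_def by (auto simp: blk_def)
  qed
  have "T = U' @ blks (Suc j) k" using T2 U'_def by simp
  moreover have "length U + j + Suc 0 = length U'" using lU' by simp
  ultimately show ?case using st1 st2 IH T_def pj by simp
qed


lemma ed_refl: "ed xs xs = 0"
proof (induction xs)
  case Nil then show ?case by simp
next
  case (Cons x xs) then show ?case by simp
qed

lemma ed_zero: "ed xs ys = 0 \<Longrightarrow> xs = ys"
proof (induction xs ys rule: ed.induct)
  case (1 ys) then show ?case by simp
next
  case (2 x xs) then show ?case by simp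
next
  case (3 x xs y ys) then show ?case by (auto split: if_splits)
qed

lemma ed_prefix: "ed (u @ xs) (u @ ys) \<le> ed xs ys"
proof (induction u)
  case Nil then show ?case by simp
next
  case (Cons a u)
  have "ed ((a # u) @ xs) ((a # u) @ ys) \<le> ed (u @ xs) (u @ ys)"
    by simp
  then show ?case using Cons by linarith
qed

lemma ed_one:
  assumes "ed xs ys \<le> 1" "xs \<noteq> ys" shows "ed (u @ xs) (u @ ys) = 1"
proof -
  have "ed (u @ xs) (u @ ys) \<le> 1" using ed_prefix[of u xs ys] assms(1) by linarith
  moreover have "ed (u @ xs) (u @ ys) \<noteq> 0" using ed_zero assms(2) by fastforce
  ultimately show ?thesis by linarith
qed

lemma ed_sub: "ed ((a::'a) # R) (b # R) \<le> 1"
  using ed_refl[of R] by simp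

lemma ed_del: "ed ((a::'a) # r # R) (r # R) \<le> 1"
  using ed_refl[of "r # R"] by (simp only: ed.simps)

lemma ed_ins: "ed ((a::'a) # R) (b # a # R) \<le> 1"
  using ed_refl[of "a # R"] by (simp only: ed.simps)


lemma z_End_alt: "z_End T = length (lzend_phrases T [0] 0)"
  by (simp add: z_End_def lzend_factorization_def)

lemma zT:
  assumes "K \<le> Suc m"
  shows "\<exists>p. z_End (replicate m 0 @ 1 # 2 # blks 1 K) = p + 1 + K \<and> 1 \<le> p \<and> 2 ^ (p - 1) \<le> m + 1"
proof -
  define T where "T = replicate m 0 @ 1 # 2 # blks 1 K"
  obtain E' cnt where h: "length (lzend_phrases T [0] 0) = cnt + length (lzend_phrases T E' (Suc m))"
      "1 \<le> cnt" "(0 + 1) * 2 ^ (cnt - 1) \<le> m + 1"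
      "\<forall>e\<in>set E'. e \<le> Suc m" "Suc m \<in> set E'"
    using prefix_parse[of T m 1 "2 # blks 1 K" 0 "[0]"] T_def by auto
  have s2: "length (lzend_phrases T E' (Suc m)) = Suc (length (lzend_phrases T (E' @ [Suc m + Suc 0]) (Suc m + Suc 0)))"
  proof (rule step_fresh[of "Suc m" 0 T "Suc m"])
    show "Suc m + 0 < length T" using T_def by simp
    show "Suc m \<in> set E'" by (rule h(5))
    show "0 \<le> Suc m" by simp
    show "take 0 (drop (Suc m) T) = drop (Suc m - 0) (take (Suc m) T)" using T_def by simp
    show "\<forall>e\<in>set E'. e \<le> Suc m" by (rule h(4))
    have "T ! (Suc m + 0) = 2" using T_def by (simp add: nth_append)
    moreover have "take (Suc m) T = replicate m 0 @ [1]" using T_def by simp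
    ultimately show "T ! (Suc m + 0) \<notin> set (take (Suc m) T)" by simp
  qed
  define U where "U = replicate m 0 @ [1::nat, 2]"
  have TU: "T = U @ blks 1 K" using T_def U_def by simp
  have lU: "length U = Suc m + Suc 0" using U_def by simp
  have s3: "length (lzend_phrases (U @ blks 1 K) (E' @ [length U]) (length U)) = K"
  proof (rule T_blocks[of K 1 _ "Suc m"])
    show "Suc K - 1 = K" by simp
    show "1 \<le> (1::nat)" by simp
    show "Suc m \<in> set (E' @ [length U])" using h(5) by simp
    show "Suc m \<le> length U" using lU by simp
    show "K \<le> Suc m" by (rule assms)
    show "U ! (Suc m - 1) = 1" using U_def by (simp add: nth_append)
    show "\<forall>i. Suc m - K \<le> i \<longrightarrow> i < Suc m - 1 \<longrightarrow> U ! i = 0" using U_def by (auto simp: nth_append)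
    show "\<forall>e\<in>set (E' @ [length U]). e \<le> length U" using h(4) lU by auto
    show "\<forall>i\<ge>1. i + 3 \<notin> set U" using U_def by auto
  qed
  have "z_End T = cnt + 1 + K"
    using h(1) s2 s3 TU lU by (simp add: z_End_alt)
  then show ?thesis using h(2,3) T_def by auto
qed


lemma zSub:
  assumes "2 * K \<le> m"
  shows "2 * K + 1 \<le> z_End (replicate m 0 @ 3 # 2 # blks 1 K)"
proof -
  define T where "T = replicate m 0 @ 3 # 2 # blks 1 K"
  obtain E' cnt where h: "length (lzend_phrases T [0] 0) = cnt + length (lzend_phrases T E' (Suc m))"
      "1 \<le> cnt" "\<forall>e\<in>set E'. e \<le> Suc m" "Suc m \<in> set E'" "\<exists>e0\<in>set E'. m \<le> 2 * e0 \<and> e0 \<le> m"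
    using prefix_parse[of T m 3 "2 # blks 1 K" 0 "[0]"] T_def by auto
  obtain e0 where e0: "e0 \<in> set E'" "m \<le> 2 * e0" "e0 \<le> m" using h(5) by blast
  have s2: "length (lzend_phrases T E' (Suc m)) = Suc (length (lzend_phrases T (E' @ [Suc m + Suc 0]) (Suc m + Suc 0)))"
  proof (rule step_fresh[of "Suc m" 0 T "Suc m"])
    show "Suc m + 0 < length T" using T_def by simp
    show "Suc m \<in> set E'" by (rule h(4))
    show "0 \<le> Suc m" by simp
    show "take 0 (drop (Suc m) T) = drop (Suc m - 0) (take (Suc m) T)" using T_def by simp
    show "\<forall>e\<in>set E'. e \<le> Suc m" by (rule h(3))
    have "T ! (Suc m + 0) = 2" using T_def by (simp add: nth_append)
    moreover have "take (Suc m) T = replicate m 0 @ [3]" using T_def by simp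
    ultimately show "T ! (Suc m + 0) \<notin> set (take (Suc m) T)" by simp
  qed
  define U where "U = replicate m 0 @ [3::nat, 2]"
  have TU: "T = U @ blks 1 K" using T_def U_def by simp
  have lU: "length U = Suc m + Suc 0" using U_def by simp
  have s3: "length (lzend_phrases (U @ blks 1 K) (E' @ [length U]) (length U)) = 2 * K"
  proof (rule T'_blocks[of K 1 _ e0])
    show "Suc K - 1 = K" by simp
    show "1 \<le> (1::nat)" by simp
    show "e0 \<in> set (E' @ [length U])" using e0 by simp
    show "e0 \<le> length U" using lU e0 by simp
    show "K \<le> Suc e0" using e0 assms by simp
    show "\<forall>i<e0. U ! i = 0" using U_def e0 by (auto simp: nth_append)
    show "\<forall>e\<in>set (E' @ [length U]). e \<le> length U" using h(3) lU by auto
    show "nox U (1 - 1)" unfolding nox_def U_def by (auto simp: nth_append less_Suc_eq)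
    show "\<forall>q. Suc q = length U \<longrightarrow> U ! q \<noteq> 0" using U_def by (auto simp: nth_append)
    show "\<forall>i\<ge>1. i + 3 \<notin> set U" using U_def by auto
  qed
  have "z_End T = cnt + 1 + 2 * K"
    using h(1) s2 s3 TU lU by (simp add: z_End_alt)
  then show ?thesis using h(2) T_def by auto
qed

lemma zDel:
  assumes "2 * K \<le> m"
  shows "2 * K + 1 \<le> z_End (replicate m 0 @ 2 # blks 1 K)"
proof -
  define T where "T = replicate m 0 @ 2 # blks 1 K"
  obtain E' cnt where h: "length (lzend_phrases T [0] 0) = cnt + length (lzend_phrases T E' (Suc m))"
      "1 \<le> cnt" "\<forall>e\<in>set E'. e \<le> Suc m" "Suc m \<in> set E'" "\<exists>e0\<in>set E'. m \<le> 2 * e0 \<and> e0 \<le> m"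
    using prefix_parse[of T m 2 "blks 1 K" 0 "[0]"] T_def by auto
  obtain e0 where e0: "e0 \<in> set E'" "m \<le> 2 * e0" "e0 \<le> m" using h(5) by blast
  define U where "U = replicate m 0 @ [2::nat]"
  have TU: "T = U @ blks 1 K" using T_def U_def by simp
  have lU: "length U = Suc m" using U_def by simp
  have s3: "length (lzend_phrases (U @ blks 1 K) E' (length U)) = 2 * K"
  proof (rule T'_blocks[of K 1 _ e0])
    show "Suc K - 1 = K" by simp
    show "1 \<le> (1::nat)" by simp
    show "e0 \<in> set E'" using e0 by simp
    show "e0 \<le> length U" using lU e0 by simp
    show "K \<le> Suc e0" using e0 assms by simp
    show "\<forall>i<e0. U ! i = 0" using U_def e0 by (auto simp: nth_append)
    show "\<forall>e\<in>set E'. e \<le> length U" using h(3) lU by auto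
    show "nox U (1 - 1)" unfolding nox_def U_def by (auto simp: nth_append less_Suc_eq)
    show "\<forall>q. Suc q = length U \<longrightarrow> U ! q \<noteq> 0" using U_def by (auto simp: nth_append)
    show "\<forall>i\<ge>1. i + 3 \<notin> set U" using U_def by auto
  qed
  have "z_End T = cnt + 2 * K"
    using h(1) s3 TU lU by (simp add: z_End_alt)
  then show ?thesis using h(2) T_def by auto
qed

lemma zIns:
  assumes "2 * K \<le> m" "1 \<le> K"
  shows "2 * K + 1 \<le> z_End (replicate m 0 @ 3 # 1 # 2 # blks 1 K)"
proof -
  define T where "T = replicate m 0 @ 3 # 1 # 2 # blks 1 K"
  have T2: "T = replicate m 0 @ 3 # 1 # 2 # 1 # 4 # blks 2 K"
    using T_def blks_Cons[of 1 K] assms(2) by (simp add: blk_def numeral_2_eq_2)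
  obtain E' cnt where h: "length (lzend_phrases T [0] 0) = cnt + length (lzend_phrases T E' (Suc m))"
      "1 \<le> cnt" "\<forall>e\<in>set E'. e \<le> Suc m" "Suc m \<in> set E'" "\<exists>e0\<in>set E'. m \<le> 2 * e0 \<and> e0 \<le> m"
    using prefix_parse[of T m 3 "1 # 2 # blks 1 K" 0 "[0]"] T_def by auto
  obtain e0 where e0: "e0 \<in> set E'" "m \<le> 2 * e0" "e0 \<le> m" using h(5) by blast
  have s2: "length (lzend_phrases T E' (Suc m)) = Suc (length (lzend_phrases T (E' @ [Suc m + Suc 0]) (Suc m + Suc 0)))"
  proof (rule step_fresh[of "Suc m" 0 T "Suc m"])
    show "Suc m + 0 < length T" using T_def by simp
    show "Suc m \<in> set E'" by (rule h(4))
    show "0 \<le> Suc m" by simp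
    show "take 0 (drop (Suc m) T) = drop (Suc m - 0) (take (Suc m) T)" using T_def by simp
    show "\<forall>e\<in>set E'. e \<le> Suc m" by (rule h(3))
    have "T ! (Suc m + 0) = 1" using T_def by (simp add: nth_append)
    moreover have "take (Suc m) T = replicate m 0 @ [3]" using T_def by simp
    ultimately show "T ! (Suc m + 0) \<notin> set (take (Suc m) T)" by simp
  qed
  define E2 where "E2 = E' @ [Suc m + Suc 0]"
  have s3: "length (lzend_phrases T E2 (Suc m + Suc 0)) = Suc (length (lzend_phrases T (E2 @ [Suc m + Suc 0 + Suc 0]) (Suc m + Suc 0 + Suc 0)))"
  proof (rule step_fresh[of "Suc m + Suc 0" 0 T "Suc m"])
    show "Suc m + Suc 0 + 0 < length T" using T_def by simp
    show "Suc m \<in> set E2" using h(4) E2_def by simp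
    show "0 \<le> Suc m" by simp
    show "take 0 (drop (Suc m + Suc 0) T) = drop (Suc m - 0) (take (Suc m) T)" using T_def by simp
    show "\<forall>e\<in>set E2. e \<le> Suc m + Suc 0" using h(3) E2_def by auto
    have "T ! (Suc m + Suc 0 + 0) = 2" using T_def by (simp add: nth_append)
    moreover have "take (Suc m + Suc 0) T = replicate m 0 @ [3, 1]" using T_def by simp
    ultimately show "T ! (Suc m + Suc 0 + 0) \<notin> set (take (Suc m + Suc 0) T)" by simp
  qed
  define E3 where "E3 = E2 @ [Suc m + Suc 0 + Suc 0]"
  have s4: "length (lzend_phrases T E3 (Suc m + Suc 0 + Suc 0)) = Suc (length (lzend_phrases T (E3 @ [Suc m + Suc 0 + Suc 0 + Suc 1]) (Suc m + Suc 0 + Suc 0 + Suc 1)))"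
  proof (rule step_fresh[of "Suc m + Suc 0 + Suc 0" 1 T "Suc m + Suc 0"])
    show "Suc m + Suc 0 + Suc 0 + 1 < length T" using T2 by simp
    show "Suc m + Suc 0 \<in> set E3" using E2_def E3_def by simp
    show "1 \<le> Suc m + Suc 0" by simp
    show "take 1 (drop (Suc m + Suc 0 + Suc 0) T) = drop (Suc m + Suc 0 - 1) (take (Suc m + Suc 0) T)"
      using T2 by (simp add: nth_append)
    show "\<forall>e\<in>set E3. e \<le> Suc m + Suc 0 + Suc 0" using h(3) E2_def E3_def by auto
    have "T ! (Suc m + Suc 0 + Suc 0 + 1) = 4" using T2 by (simp add: nth_append)
    moreover have "take (Suc m + Suc 0 + Suc 0) T = replicate m 0 @ [3, 1, 2]" using T2 by simp
    ultimately show "T ! (Suc m + Suc 0 + Suc 0 + 1) \<notin> set (take (Suc m + Suc 0 + Suc 0) T)" by simp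
  qed
  define U where "U = replicate m 0 @ [3::nat, 1, 2, 1, 4]"
  have TU: "T = U @ blks 2 K" using T2 U_def by simp
  have lU: "length U = Suc m + Suc 0 + Suc 0 + Suc 1" using U_def by simp
  have s5: "length (lzend_phrases (U @ blks 2 K) (E3 @ [length U]) (length U)) = 2 * (K - 1)"
  proof (rule T'_blocks[of K 2 _ e0])
    show "Suc K - 2 = K - 1" by simp
    show "1 \<le> (2::nat)" by simp
    show "e0 \<in> set (E3 @ [length U])" using e0 E2_def E3_def by simp
    show "e0 \<le> length U" using lU e0 by simp
    show "K \<le> Suc e0" using e0 assms by simp
    show "\<forall>i<e0. U ! i = 0" using U_def e0 by (auto simp: nth_append)
    show "\<forall>e\<in>set (E3 @ [length U]). e \<le> length U" using h(3) lU E2_def E3_def by auto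
    show "nox U (2 - 1)" unfolding nox_def
    proof (intro allI impI)
      fix q assume q: "q < length U" "U ! q = 1" "2 - 1 \<le> q"
      have "q = Suc m \<or> q = m + 3"
      proof (rule ccontr)
        assume nq: "\<not> (q = Suc m \<or> q = m + 3)"
        have "q < m \<or> q = m \<or> q = m + 2 \<or> q = m + 4" using nq q(1) U_def by auto
        then show False using q(2) U_def by (auto simp: nth_append)
      qed
      then show "\<exists>i<2 - 1. U ! (q - (2 - 1) + i) \<noteq> 0" using U_def by (auto simp: nth_append)
    qed
    show "\<forall>q. Suc q = length U \<longrightarrow> U ! q \<noteq> 0" using U_def by (auto simp: nth_append)
    show "\<forall>i\<ge>2. i + 3 \<notin> set U" using U_def by auto
  qed
  have "z_End T = cnt + 3 + 2 * (K - 1)"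
    using h(1) s2 s3 s4 s5 TU lU E2_def E3_def by (simp add: z_End_alt)
  then show ?thesis using h(2) T_def assms(2) by auto
qed


lemma lb_formula: "2 * length (blks 1 K) = K * (K + 3)"
proof (induction K)
  case 0 then show ?case by (simp add: blks_Nil)
next
  case (Suc K)
  have "blks 1 (Suc K) = blks 1 K @ blk (Suc K)" unfolding blks_def by simp
  then have "length (blks 1 (Suc K)) = length (blks 1 K) + Suc (Suc K)"
    using length_blk[of "Suc K"] by simp
  then show ?case using Suc by (simp add: algebra_simps)
qed

lemma core:
  assumes "2 * K \<le> m" "1 \<le> K"
  shows "\<exists>(T::nat list) (T'::nat list) p. length T = m + 2 + length (blks 1 K) \<and> edit_ok et T T' \<and> z_End T = p + 1 + K
     \<and> 1 \<le> p \<and> 2 ^ (p - 1) \<le> m + 1 \<and> 2 * K + 1 \<le> z_End T'"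
proof -
  define u where "u = replicate m (0::nat)"
  define T where "T = u @ 1 # 2 # blks 1 K"
  obtain p where p: "z_End T = p + 1 + K" "1 \<le> p" "2 ^ (p - 1) \<le> m + 1"
    using zT[of K m] assms T_def u_def by auto
  have lT: "length T = m + 2 + length (blks 1 K)" using T_def u_def by simp
  show ?thesis
  proof (cases et)
    case Sub
    define T' where "T' = u @ 3 # 2 # blks 1 K"
    have "edit_ok et T T'" unfolding edit_ok_def Sub T_def T'_def
      using ed_one[OF ed_sub[of 1 "2 # blks 1 K" 3]] by simp
    moreover have "2 * K + 1 \<le> z_End T'" using zSub assms T'_def u_def by simp
    ultimately have "length T = m + 2 + length (blks 1 K) \<and> edit_ok et T T' \<and> z_End T = p + 1 + K
     \<and> 1 \<le> p \<and> 2 ^ (p - 1) \<le> m + 1 \<and> 2 * K + 1 \<le> z_End T'" using p lT by simp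
    then show ?thesis by blast
  next
    case Ins
    define T' where "T' = u @ 3 # 1 # 2 # blks 1 K"
    have "edit_ok et T T'" unfolding edit_ok_def Ins T_def T'_def
      using ed_one[OF ed_ins[of 1 "2 # blks 1 K" 3]] by simp
    moreover have "2 * K + 1 \<le> z_End T'" using zIns assms T'_def u_def by simp
    ultimately have "length T = m + 2 + length (blks 1 K) \<and> edit_ok et T T' \<and> z_End T = p + 1 + K
     \<and> 1 \<le> p \<and> 2 ^ (p - 1) \<le> m + 1 \<and> 2 * K + 1 \<le> z_End T'" using p lT by simp
    then show ?thesis by blast
  next
    case Del
    define T' where "T' = u @ 2 # blks 1 K"
    have "edit_ok et T T'" unfolding edit_ok_def Del T_def T'_def
      using ed_one[OF ed_del[of 1 2 "blks 1 K"]] by simp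
    moreover have "2 * K + 1 \<le> z_End T'" using zDel assms T'_def u_def by simp
    ultimately have "length T = m + 2 + length (blks 1 K) \<and> edit_ok et T T' \<and> z_End T = p + 1 + K
     \<and> 1 \<le> p \<and> 2 ^ (p - 1) \<le> m + 1 \<and> 2 * K + 1 \<le> z_End T'" using p lT by simp
    then show ?thesis by blast
  qed
qed

lemma sq_le_pow: "p * p \<le> (2::nat) ^ (p + 2)"
proof (induction p)
  case 0 then show ?case by simp
next
  case (Suc p)
  show ?case
  proof (cases "p \<le> 2")
    case True
    then have "p = 0 \<or> p = 1 \<or> p = 2" by auto
    then show ?thesis by auto
  next
    case False
    have "Suc p * Suc p \<le> 2 * (p * p)"
    proof -
      have "3 * p \<le> p * p" using False by (intro mult_right_mono) auto
      then have "2 * p + 1 \<le> p * p" using False by linarith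
      then show ?thesis by (simp add: algebra_simps)
    qed
    also have "\<dots> \<le> 2 * 2 ^ (p + 2)" using Suc by simp
    finally show ?thesis by simp
  qed
qed


lemma fam:
  assumes n: "6 \<le> n"
  shows "\<exists>(T::nat list) (T'::nat list) K p. length T = n \<and> edit_ok et T T' \<and> z_End T = p + 1 + K
     \<and> 1 \<le> p \<and> 1 \<le> K \<and> p * p \<le> 56 * K \<and> 2 * K + 1 \<le> z_End T' \<and> n \<le> 11 * (K * K)
     \<and> (\<forall>K0. 2 + 2 * K0 + length (blks 1 K0) \<le> n \<longrightarrow> K0 \<le> K)"
proof -
  define P where "P = (\<lambda>K. 2 + 2 * K + length (blks 1 K) \<le> n)"
  define K where "K = Greatest P"
  have lb1: "length (blks 1 1) = 2" using lb_formula[of 1] by simp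
  have P1: "P 1" unfolding P_def using lb1 n by simp
  have bnd: "\<And>y. P y \<Longrightarrow> y \<le> n" unfolding P_def by auto
  have PK: "P K" unfolding K_def by (rule GreatestI_nat[of P 1 n, OF P1 bnd])
  have maxK: "\<forall>K0. P K0 \<longrightarrow> K0 \<le> K" unfolding K_def using Greatest_le_nat[of P _ n] bnd by blast
  have K1: "1 \<le> K" using maxK P1 by blast
  have nP: "\<not> P (Suc K)" using maxK by fastforce
  have lbS: "length (blks 1 (Suc K)) = length (blks 1 K) + Suc (Suc K)"
    using lb_formula[of K] lb_formula[of "Suc K"] by (simp add: algebra_simps)
  define m where "m = n - 2 - length (blks 1 K)"
  have m1: "2 * K \<le> m" "m + 2 + length (blks 1 K) = n" using PK unfolding P_def m_def by auto
  have m2: "m + 1 \<le> 3 * K + 4" using nP lbS m1 unfolding P_def by simp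
  obtain T T' p where h: "length (T::nat list) = m + 2 + length (blks 1 K)" "edit_ok et T (T'::nat list)"
    "z_End T = p + 1 + K" "1 \<le> p" "2 ^ (p - 1) \<le> m + 1" "2 * K + 1 \<le> z_End T'"
    using core[OF m1(1) K1, of et] by blast
  have "p * p \<le> 2 ^ (p + 2)" by (rule sq_le_pow)
  also have "(2::nat) ^ (p + 2) = 8 * 2 ^ (p - 1)"
  proof -
    obtain q where q: "p = Suc q" using h(4) by (cases p) auto
    show ?thesis unfolding q by (simp add: power_add)
  qed
  also have "\<dots> \<le> 8 * (3 * K + 4)" using h(5) m2 by simp
  also have "\<dots> \<le> 56 * K" using K1 by simp
  finally have pp: "p * p \<le> 56 * K" .
  have kk: "K * (K + 3) = K * K + 3 * K" by (simp add: algebra_simps)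
  have "\<not> (2 + 2 * Suc K + length (blks 1 (Suc K)) \<le> n)" using nP unfolding P_def .
  then have "n < 3 * K + 6 + length (blks 1 K)" using lbS by simp
  then have "2 * n < K * K + 9 * K + 12" using lb_formula[of K] kk by linarith
  moreover have "K \<le> K * K" using K1 by simp
  moreover have "1 \<le> K * K" using K1 by simp
  ultimately have nK: "n \<le> 11 * (K * K)" by linarith
  show ?thesis
    using h pp nK K1 m1 maxK unfolding P_def
    by (intro exI[of _ T] exI[of _ T'] exI[of _ K] exI[of _ p]) simp
qed



lemma edit_len: "edit_ok k T T' \<Longrightarrow> length T' \<le> Suc (length T)"
  unfolding edit_ok_def by (cases k) auto

lemma ratio_le: "real a / real b \<le> real (a::nat)"
proof (cases "b = 0")
  case True then show ?thesis by simp
next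
  case False
  then have "real b \<ge> 1" by simp
  then have "real a / real b \<le> real a / 1" by (intro divide_left_mono) auto
  then show ?thesis by simp
qed

lemma MS_ge:
  fixes T T' :: "nat list"
  assumes "length T = n" "edit_ok k T T'"
  shows "real (z_End T') / real (z_End T) \<le> MS z_End k n"
  unfolding MS_def
proof (rule cSup_upper)
  show "real (z_End T') / real (z_End T) \<in> {real (z_End T') / real (z_End T) |(T::nat list) (T'::nat list). length T = n \<and> edit_ok k T T'}"
    using assms by blast
  show "bdd_above {real (z_End T') / real (z_End T) |(T::nat list) (T'::nat list). length T = n \<and> edit_ok k T T'}"
  proof (rule bdd_aboveI[of _ "real (Suc n)"])
    fix x assume "x \<in> {real (z_End T') / real (z_End T) |(T::nat list) (T'::nat list). length T = n \<and> edit_ok k T T'}"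
    then obtain A B :: "nat list" where AB: "x = real (z_End B) / real (z_End A)" "length A = n" "edit_ok k A B" by blast
    have "z_End B \<le> Suc n" using z_End_le[of B] edit_len[OF AB(3)] AB(2) by simp
    then have "real (z_End B) \<le> real (Suc n)" by (simp only: of_nat_le_iff)
    then show "x \<le> real (Suc n)" using AB(1) ratio_le[of "z_End B" "z_End A"] by linarith
  qed
qed

lemma AS_ge:
  fixes T T' :: "nat list"
  assumes "length T = n" "edit_ok k T T'"
  shows "real (z_End T') - real (z_End T) \<le> AS z_End k n"
  unfolding AS_def
proof (rule cSup_upper)
  show "real (z_End T') - real (z_End T) \<in> {real (z_End T') - real (z_End T) |(T::nat list) (T'::nat list). length T = n \<and> edit_ok k T T'}"
    using assms by blast
  show "bdd_above {real (z_End T') - real (z_End T) |(T::nat list) (T'::nat list). length T = n \<and> edit_ok k T T'}"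
  proof (rule bdd_aboveI[of _ "real (Suc n)"])
    fix x assume "x \<in> {real (z_End T') - real (z_End T) |(T::nat list) (T'::nat list). length T = n \<and> edit_ok k T T'}"
    then obtain A B :: "nat list" where AB: "x = real (z_End B) - real (z_End A)" "length A = n" "edit_ok k A B" by blast
    have "z_End B \<le> Suc n" using z_End_le[of B] edit_len[OF AB(3)] AB(2) by simp
    then show "x \<le> real (Suc n)" using AB(1) by simp
  qed
qed

lemma sq_bound: "1 \<le> p \<Longrightarrow> p * p \<le> 56 * K \<Longrightarrow> (2 * p + 1) * (2 * p + 1) \<le> 504 * (K::nat)"
proof -
  assume p: "1 \<le> p" "p * p \<le> 56 * K"
  have "p \<le> p * p" using p by simp
  moreover have "1 \<le> p * p" using p by simp
  moreover have "(2 * p + 1) * (2 * p + 1) = 4 * (p * p) + 4 * p + 1" by (simp add: algebra_simps)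
  ultimately show ?thesis using p by linarith
qed

lemma partA: "liminf (\<lambda>n. ereal (MS z_End k n)) \<ge> (2::ereal)"
  unfolding le_Liminf_iff
proof (intro allI impI)
  fix y :: ereal assume y: "y < 2"
  show "\<forall>\<^sub>F n in sequentially. y < ereal (MS z_End k n)"
  proof (cases y)
    case (real r)
    with y have r: "r < 2" by simp
    define d where "d = 2 - r"
    have d: "d > 0" using r d_def by simp
    define K0 where "K0 = nat \<lceil>504 / d\<^sup>2\<rceil> + 1"
    have "504 / d\<^sup>2 \<le> real (nat \<lceil>504 / d\<^sup>2\<rceil>)" by (rule real_nat_ceiling_ge)
    moreover have "real K0 = real (nat \<lceil>504 / d\<^sup>2\<rceil>) + 1" unfolding K0_def by (simp only: of_nat_add of_nat_1)
    ultimately have K0: "504 / d\<^sup>2 < real K0" by linarith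
    define N0 where "N0 = max 6 (2 + 2 * K0 + length (blks 1 K0))"
    show ?thesis unfolding eventually_sequentially
    proof (intro exI[of _ N0] allI impI)
      fix n assume nN: "N0 \<le> n"
      have n6: "6 \<le> n" using nN unfolding N0_def by simp
      have nK0: "2 + 2 * K0 + length (blks 1 K0) \<le> n" using nN unfolding N0_def by simp
      obtain T T' K p where h: "length (T::nat list) = n" "edit_ok k T (T'::nat list)" "z_End T = p + 1 + K"
        "1 \<le> p" "1 \<le> K" "p * p \<le> 56 * K" "2 * K + 1 \<le> z_End T'"
        "\<forall>K0. 2 + 2 * K0 + length (blks 1 K0) \<le> n \<longrightarrow> K0 \<le> K"
        using fam[OF n6, of k] by blast
      have KK0: "K0 \<le> K" using h(8) nK0 by blast
      have sq0: "(2 * p + 1) * (2 * p + 1) \<le> 504 * K" by (rule sq_bound[OF h(4,6)])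
      have sq: "(real (2 * p + 1))\<^sup>2 \<le> 504 * real K"
      proof -
        have "real ((2 * p + 1) * (2 * p + 1)) \<le> real (504 * K)" using sq0 by (simp only: of_nat_le_iff)
        then show ?thesis by (simp only: power2_eq_square of_nat_mult of_nat_numeral)
      qed
      have d2: "d\<^sup>2 > 0" using d by simp
      have "504 < real K0 * d\<^sup>2" using K0 pos_divide_less_eq[OF d2] by blast
      then have "504 < d\<^sup>2 * real K0" by (simp only: mult.commute)
      also have "\<dots> \<le> d\<^sup>2 * real K" using KK0 d2 by (intro mult_left_mono) auto
      finally have a1: "504 < d\<^sup>2 * real K" .
      have Kp: "0 < real K" using h(5) by simp
      have "504 * real K < (d\<^sup>2 * real K) * real K" by (rule mult_strict_right_mono[OF a1 Kp])
      also have "(d\<^sup>2 * real K) * real K = (d * real K)\<^sup>2" by (simp add: power2_eq_square)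
      finally have "(real (2 * p + 1))\<^sup>2 < (d * real K)\<^sup>2" using sq by linarith
      moreover have "0 \<le> d * real K" using d Kp by simp
      ultimately have key: "real (2 * p + 1) < d * real K"
        by (rule power_less_imp_less_base)
      have zT: "real (z_End T) = real p + 1 + real K" using h(3) by simp
      have "d * real K \<le> d * (real p + 1 + real K)" using d by (intro mult_left_mono) auto
      moreover have "r * real (z_End T) = 2 * (real p + 1 + real K) - d * (real p + 1 + real K)"
        unfolding zT d_def by (simp add: algebra_simps)
      moreover have "real (2 * K + 1) = 2 * real K + 1" by simp
      moreover have "real (2 * p + 1) = 2 * real p + 1" by simp
      ultimately have "r * real (z_End T) < real (2 * K + 1)"
        using key by (smt (verit))
      also have "\<dots> \<le> real (z_End T')" using h(7) by (simp only: of_nat_le_iff)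
      finally have rz: "r * real (z_End T) < real (z_End T')" .
      have zpos: "0 < real (z_End T)" using zT by simp
      have "r < real (z_End T') / real (z_End T)" using rz zpos by (simp add: less_divide_eq)
      also have "\<dots> \<le> MS z_End k n" by (rule MS_ge[OF h(1,2)])
      finally show "y < ereal (MS z_End k n)" using real by simp
    qed
  next
    case PInf with y show ?thesis by simp
  next
    case MInf then show ?thesis by simp
  qed
qed


lemma partB: "\<exists>c > 0. \<forall>N. \<exists>T T' :: nat list. N \<le> z_End T \<and> edit_ok k T T' \<and>
          real (z_End T') - real (z_End T) \<ge> real (z_End T) - c * sqrt (real (z_End T))"
proof (intro exI[of _ 23] conjI allI)
  fix N :: nat
  define n where "n = max 6 (2 + 2 * N + length (blks 1 N))"
  have n6: "6 \<le> n" unfolding n_def by simp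
  have nN: "2 + 2 * N + length (blks 1 N) \<le> n" unfolding n_def by simp
  obtain T T' K p where h: "length (T::nat list) = n" "edit_ok k T (T'::nat list)" "z_End T = p + 1 + K"
    "1 \<le> p" "1 \<le> K" "p * p \<le> 56 * K" "2 * K + 1 \<le> z_End T'"
    "\<forall>K0. 2 + 2 * K0 + length (blks 1 K0) \<le> n \<longrightarrow> K0 \<le> K"
    using fam[OF n6, of k] by blast
  have NK: "N \<le> K" using h(8) nN by blast
  have sq0: "(2 * p + 1) * (2 * p + 1) \<le> 529 * z_End T" using sq_bound[OF h(4,6)] h(3) by simp
  define z where "z = real (z_End T)"
  have z0: "0 \<le> z" unfolding z_def by simp
  have sq: "(real (2 * p + 1))\<^sup>2 \<le> (23 * sqrt z)\<^sup>2"
  proof -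
    have "real ((2 * p + 1) * (2 * p + 1)) \<le> real (529 * z_End T)" using sq0 by (simp only: of_nat_le_iff)
    then have "(real (2 * p + 1))\<^sup>2 \<le> 529 * z" unfolding z_def by (simp only: power2_eq_square of_nat_mult of_nat_numeral)
    moreover have "(23 * sqrt z)\<^sup>2 = 529 * z" using z0 by (simp add: power_mult_distrib)
    ultimately show ?thesis by simp
  qed
  have b: "real (2 * p + 1) \<le> 23 * sqrt z"
    by (rule power2_le_imp_le[OF sq]) (simp add: z0)
  have "real (2 * K + 1) \<le> real (z_End T')" using h(7) by (simp only: of_nat_le_iff)
  moreover have "z = real p + 1 + real K" unfolding z_def using h(3) by simp
  ultimately have "real (z_End T') - z \<ge> z - 23 * sqrt z" using b by simp
  then have "N \<le> z_End T \<and> edit_ok k T T' \<and> real (z_End T') - real (z_End T) \<ge> real (z_End T) - 23 * sqrt (real (z_End T))"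
    using NK h(2,3) unfolding z_def by simp
  then show "\<exists>T T' :: nat list. N \<le> z_End T \<and> edit_ok k T T' \<and> real (z_End T') - real (z_End T) \<ge> real (z_End T) - 23 * sqrt (real (z_End T))"
    by blast
qed simp

lemma partC: "(\<lambda>n. AS z_End k n) \<in> \<Omega>(\<lambda>n. sqrt (real n))"
  unfolding bigomega_def
proof (intro CollectI exI[of _ "1/8"] conjI)
  show "(0::real) < 1/8" by simp
  define K0 :: nat where "K0 = 224"
  define N0 where "N0 = max 6 (2 + 2 * K0 + length (blks 1 K0))"
  show "\<forall>\<^sub>F n in sequentially. 1/8 * norm (sqrt (real n)) \<le> norm (AS z_End k n)"
    unfolding eventually_sequentially
  proof (intro exI[of _ N0] allI impI)
    fix n assume nN: "N0 \<le> n"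
    have n6: "6 \<le> n" using nN unfolding N0_def by simp
    have nK0: "2 + 2 * K0 + length (blks 1 K0) \<le> n" using nN unfolding N0_def by simp
    obtain T T' K p where h: "length (T::nat list) = n" "edit_ok k T (T'::nat list)" "z_End T = p + 1 + K"
      "1 \<le> p" "1 \<le> K" "p * p \<le> 56 * K" "2 * K + 1 \<le> z_End T'" "n \<le> 11 * (K * K)"
      "\<forall>K0. 2 + 2 * K0 + length (blks 1 K0) \<le> n \<longrightarrow> K0 \<le> K"
      using fam[OF n6, of k] by blast
    have KK0: "224 \<le> K" using h(9) nK0 unfolding K0_def by blast
    have "(2 * p) * (2 * p) \<le> 224 * K" using h(6) by simp
    also have "\<dots> \<le> K * K" using KK0 by (intro mult_right_mono) auto
    finally have "(2 * p) * (2 * p) \<le> K * K" .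
    then have p2: "2 * p \<le> K"
    proof -
      assume a: "(2 * p) * (2 * p) \<le> K * K"
      show ?thesis
      proof (rule ccontr)
        assume "\<not> 2 * p \<le> K"
        then have "K * K < (2 * p) * (2 * p)" by (intro mult_strict_mono) auto
        then show False using a by simp
      qed
    qed
    have "real (2 * K + 1) \<le> real (z_End T')" using h(7) by (simp only: of_nat_le_iff)
    then have "real K - real p \<le> real (z_End T') - real (z_End T)" using h(3) by simp
    also have "\<dots> \<le> AS z_End k n" by (rule AS_ge[OF h(1,2)])
    finally have A1: "real K / 2 \<le> AS z_End k n" using p2 by simp
    have "real n \<le> (4 * real K)\<^sup>2"
    proof -
      have "real n \<le> real (11 * (K * K))" using h(8) by (simp only: of_nat_le_iff)
      also have "\<dots> \<le> 16 * (real K * real K)" by simp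
      also have "\<dots> = (4 * real K)\<^sup>2" by (simp add: power2_eq_square)
      finally show ?thesis .
    qed
    then have "sqrt (real n) \<le> sqrt ((4 * real K)\<^sup>2)" by (rule real_sqrt_le_mono)
    also have "sqrt ((4 * real K)\<^sup>2) = 4 * real K" by (rule real_sqrt_unique) auto
    finally have "sqrt (real n) \<le> 4 * real K" .
    then show "1/8 * norm (sqrt (real n)) \<le> norm (AS z_End k n)" using A1 by simp
  qed
qed


theorem mainTheorem16:
  shows "\<forall>k :: edit_type.
     liminf (\<lambda>n. ereal (MS z_End k n)) \<ge> (2::ereal)
   \<and> (\<exists>c > 0. \<forall>N. \<exists>T T' :: nat list. N \<le> z_End T \<and> edit_ok k T T' \<and>
          real (z_End T') - real (z_End T) \<ge> real (z_End T) - c * sqrt (real (z_End T)))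
   \<and> (\<lambda>n. AS z_End k n) \<in> \<Omega>(\<lambda>n. sqrt (real n))"
  using partA partB partC by blast

end
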